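(* Let $\mathcal{D}$ be a distribution over subsets of $V$ with $\mathbb{E}_{S\sim\mathcal{D}}[|S|]>0$. If $$\frac{\mathbb{E}_{S\sim\mathcal{D}}[\mathrm{Cut}(S,V\setminus S)]}{\mathbb{E}_{S\sim\mathcal{D}}[|V\setminus S|]}\ \ge\ \frac{\mathbb{E}_{S\sim\mathcal{D}}[\mathrm{Induced}(S)]}{\mathbb{E}_{S\sim\mathcal{D}}[|S|]},$$ where the left-hand side is interpreted as $+\infty$ when $\mathcal{D}$ is the point mass at $V$, then for $\alpha=\mathbb{E}_{S\sim\mathcal{D}}[|S|]/\mathbb{E}_{S\sim\mathcal{D}}[\mathrm{Induced}(S)]$ the identity-independent signaling scheme with signal space $\{0,\alpha\}$ that draws $S\sim\mathcal{D}$ and sets $s_v=\alpha\cdot\mathbf 1\{v\in S\}$ is persuasive, and its cost equals $\frac{(\mathbb{E}_{S\sim\mathcal{D}}[|S|])^2}{\mathbb{E}_{S\sim\mathcal{D}}[\mathrm{Induced}(S)]}\le\mathbb{E}_{S\sim\mathcal{D}}[|S|]$.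
   Context: Setting. $V$ is a finite set of $n$ task types and $W=(W_{u,v})_{u,v\in V}$ is a symmetric matrix with entries in $[0,1]$ and $W_{v,v}=1$. For $S\subseteq V$: $\mathrm{Cut}(S,V\setminus S)=\sum_{u\in S}\sum_{v\in V\setminus S}W_{u,v}$ and $\mathrm{Induced}(S)=\sum_{u\in S}\sum_{v\in S}W_{u,v}$ (diagonal terms included). There are $n$ agents; the type profile $t=(t_1,\dots,t_n)$ is a uniformly random bijection $[n]\to V$. An identity-independent signaling scheme with finite signal space $\Sigma\subset[0,1]$ is a distribution on $\Sigma^V$: $s\sim$ it is drawn independently of $t$ and agent $i$ privately receives $s_{t_i}$. For agent $i$, a signal $\theta\in\Sigma$ with $\Pr[s_{t_i}=\theta]>0$ and $x\ge0$, let $Q_i(x\mid\theta)=\mathbb{E}\big[x+\sum_{v'\neq t_i}W_{t_i,v'}s_{v'}\,\big|\,s_{t_i}=\theta\big]$. The scheme is persuasive if for every agent $i$ and every such $\theta$: $Q_i(\theta\mid\theta)\ge1$ and $\theta=\min\{x\ge0:Q_i(x\mid\theta)\ge1\}$. Its cost is $\mathbb{E}[\|s\|_1]$. *)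

theory Defs
  imports "HOL-Probability.Probability"
begin

definition Cut :: "('v \<Rightarrow> 'v \<Rightarrow> real) \<Rightarrow> 'v set \<Rightarrow> 'v set \<Rightarrow> real" where
  "Cut W S T = (\<Sum>u\<in>S. \<Sum>v\<in>T. W u v)"

definition Induced :: "('v \<Rightarrow> 'v \<Rightarrow> real) \<Rightarrow> 'v set \<Rightarrow> real" where
  "Induced W S = (\<Sum>u\<in>S. \<Sum>v\<in>S. W u v)"

text \<open>Uniformly random type profile: a bijection from agents 0..n-1 (n = card V) to V.\<close>

definition type_profiles :: "'v set \<Rightarrow> (nat \<Rightarrow> 'v) set" where
  "type_profiles V = {t \<in> extensional {..<card V}. bij_betw t {..<card V} V}"

definition type_dist :: "'v set \<Rightarrow> (nat \<Rightarrow> 'v) pmf" where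
  "type_dist V = pmf_of_set (type_profiles V)"

text \<open>An identity-independent signaling scheme with finite signal space Sigma in [0,1]:
  a distribution over signal vectors s : V \<Rightarrow> Sigma (values outside V are irrelevant).\<close>

definition is_signaling_scheme :: "'v set \<Rightarrow> real set \<Rightarrow> ('v \<Rightarrow> real) pmf \<Rightarrow> bool" where
  "is_signaling_scheme V Sig sch \<longleftrightarrow>
     finite Sig \<and> Sig \<subseteq> {0..1} \<and> (\<forall>s\<in>set_pmf sch. \<forall>v\<in>V. s v \<in> Sig)"

definition joint :: "'v set \<Rightarrow> ('v \<Rightarrow> real) pmf \<Rightarrow> ((nat \<Rightarrow> 'v) \<times> ('v \<Rightarrow> real)) pmf" where
  "joint V sch = pair_pmf (type_dist V) sch"

definition sig_event :: "nat \<Rightarrow> real \<Rightarrow> ((nat \<Rightarrow> 'v) \<times> ('v \<Rightarrow> real)) set" where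
  "sig_event i \<theta> = {(t, s). s (t i) = \<theta>}"

definition Q :: "'v set \<Rightarrow> ('v \<Rightarrow> 'v \<Rightarrow> real) \<Rightarrow> ('v \<Rightarrow> real) pmf \<Rightarrow> nat \<Rightarrow> real \<Rightarrow> real \<Rightarrow> real" where
  "Q V W sch i x \<theta> =
     measure_pmf.expectation (cond_pmf (joint V sch) (sig_event i \<theta>))
       (\<lambda>(t, s). x + (\<Sum>v'\<in>V - {t i}. W (t i) v' * s v'))"

definition persuasive :: "'v set \<Rightarrow> ('v \<Rightarrow> 'v \<Rightarrow> real) \<Rightarrow> ('v \<Rightarrow> real) pmf \<Rightarrow> bool" where
  "persuasive V W sch \<longleftrightarrow>
     (\<forall>i < card V. \<forall>\<theta>::real.
        measure_pmf.prob (joint V sch) (sig_event i \<theta>) > 0 \<longrightarrow>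
          Q V W sch i \<theta> \<theta> \<ge> 1 \<and> \<theta> = (LEAST x::real. 0 \<le> x \<and> Q V W sch i x \<theta> \<ge> 1))"

definition cost :: "'v set \<Rightarrow> ('v \<Rightarrow> real) pmf \<Rightarrow> real" where
  "cost V sch = measure_pmf.expectation sch (\<lambda>s. \<Sum>v\<in>V. \<bar>s v\<bar>)"

end

theory Submission
  imports Defs
begin

lemma TP_finite: "finite V \<Longrightarrow> finite (type_profiles V)"
proof -
  assume f: "finite V"
  have "type_profiles V \<subseteq> PiE {..<card V} (\<lambda>_. V)"
    unfolding type_profiles_def by (auto simp: PiE_def Pi_def bij_betw_def)
  moreover have "finite (PiE {..<card V} (\<lambda>_. V))" using f by (intro finite_PiE) auto
  ultimately show ?thesis by (rule finite_subset)
qed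

lemma TP_ne: "finite V \<Longrightarrow> type_profiles V \<noteq> {}"
proof -
  assume f: "finite V"
  obtain h where h: "bij_betw h {0..<card V} V" using ex_bij_betw_nat_finite[OF f] by blast
  have "restrict h {..<card V} \<in> type_profiles V"
    unfolding type_profiles_def using h
    by (auto simp: atLeast0LessThan intro: bij_betw_cong[THEN iffD1, rotated])
  thus ?thesis by blast
qed

lemma fiber_le:
  assumes f: "finite V" and v: "v \<in> V" and w: "w \<in> V" and i: "i < card V"
  shows "card {t \<in> type_profiles V. t i = v} \<le> card {t \<in> type_profiles V. t i = w}"
proof (rule card_inj_on_le)
  let ?f = "\<lambda>t. restrict (Transposition.transpose v w \<circ> t) {..<card V}"
  show "inj_on ?f {t \<in> type_profiles V. t i = v}"
  proof (rule inj_onI)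
    fix t t' assume a: "t \<in> {t \<in> type_profiles V. t i = v}" "t' \<in> {t \<in> type_profiles V. t i = v}" "?f t = ?f t'"
    show "t = t'"
    proof
      fix x
      show "t x = t' x"
      proof (cases "x < card V")
        case True
        then have "?f t x = ?f t' x" using a(3) by simp
        then show ?thesis using True by (auto dest: transpose_eq_imp_eq)
      next
        case False
        then show ?thesis using a(1,2) by (auto simp: type_profiles_def extensional_def)
      qed
    qed
  qed
  show "?f ` {t \<in> type_profiles V. t i = v} \<subseteq> {t \<in> type_profiles V. t i = w}"
  proof
    fix y assume "y \<in> ?f ` {t \<in> type_profiles V. t i = v}"
    then obtain t where t: "t \<in> type_profiles V" "t i = v" and y: "y = ?f t" by blast
    have b: "bij_betw t {..<card V} V" using t by (simp add: type_profiles_def)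
    have bt: "bij_betw (Transposition.transpose v w) V V" using v w
      by (simp add: bij_betw_transpose_iff)
    have "bij_betw (Transposition.transpose v w \<circ> t) {..<card V} V"
      using bij_betw_trans[OF b bt] .
    then have "bij_betw y {..<card V} V" unfolding y
      by (rule bij_betw_cong[THEN iffD1, rotated]) simp
    moreover have "y \<in> extensional {..<card V}" unfolding y by simp
    moreover have "y i = w" using i t unfolding y by simp
    ultimately show "y \<in> {t \<in> type_profiles V. t i = w}" by (simp add: type_profiles_def)
  qed
  show "finite {t \<in> type_profiles V. t i = w}" using TP_finite[OF f] by simp
qed


lemma fiber_eq:
  assumes f: "finite V" and v: "v \<in> V" and w: "w \<in> V" and i: "i < card V"
  shows "card {t \<in> type_profiles V. t i = v} = card {t \<in> type_profiles V. t i = w}"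
  using fiber_le[OF assms] fiber_le[OF f w v i] by simp

lemma uniform_ti:
  assumes f: "finite V" and i: "i < card V"
  shows "map_pmf (\<lambda>t. t i) (type_dist V) = pmf_of_set V"
proof -
  have ne: "V \<noteq> {}" using i by auto
  let ?p = "map_pmf (\<lambda>t. t i) (type_dist V)"
  have supp: "set_pmf ?p \<subseteq> V"
    using TP_finite[OF f] TP_ne[OF f] i
    by (auto simp: type_dist_def type_profiles_def bij_betw_def)
  have val: "pmf ?p v = card {t \<in> type_profiles V. t i = v} / card (type_profiles V)" for v
    using TP_finite[OF f] TP_ne[OF f]
    by (simp add: pmf_map type_dist_def measure_pmf_of_set Int_def vimage_def)
  obtain v0 where v0: "v0 \<in> V" using ne by blast
  have eq: "pmf ?p v = pmf ?p v0" if "v \<in> V" for v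
    using val fiber_eq[OF f that v0 i] by simp
  have "1 = (\<Sum>v\<in>V. pmf ?p v)" using sum_pmf_eq_1[OF f supp] by simp
  also have "\<dots> = card V * pmf ?p v0" using eq by simp
  finally have c: "pmf ?p v0 = 1 / card V" using ne f by (simp add: field_simps)
  show ?thesis
  proof (rule pmf_eqI)
    fix v
    show "pmf ?p v = pmf (pmf_of_set V) v"
    proof (cases "v \<in> V")
      case True then show ?thesis using eq[OF True] c f ne by simp
    next
      case False then have "v \<notin> set_pmf ?p" using supp by blast
      then show ?thesis using False f ne by (simp add: set_pmf_eq)
    qed
  qed
qed

lemma cond_integral:
  fixes f :: "'a \<Rightarrow> real"
  assumes fin: "finite (set_pmf p)" and pos: "measure_pmf.prob p A > 0"
  shows "measure_pmf.expectation (cond_pmf p A) f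
       = measure_pmf.expectation p (\<lambda>z. indicator A z * f z) / measure_pmf.prob p A"
proof -
  have ne: "set_pmf p \<inter> A \<noteq> {}" using pos measure_pmf_zero_iff[of p A] by auto
  have "measure_pmf.expectation (cond_pmf p A) f = (\<Sum>a\<in>set_pmf p. f a * pmf (cond_pmf p A) a)"
    using fin ne by (intro integral_measure_pmf_real) auto
  also have "\<dots> = (\<Sum>a\<in>set_pmf p. indicator A a * f a * pmf p a) / measure_pmf.prob p A"
    by (simp add: pmf_cond[OF ne] sum_divide_distrib indicator_def) (intro sum.cong, auto)
  also have "(\<Sum>a\<in>set_pmf p. indicator A a * f a * pmf p a) = measure_pmf.expectation p (\<lambda>z. indicator A z * f z)"
    using fin by (intro integral_measure_pmf_real[symmetric]) auto
  finally show ?thesis .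
qed

lemma claimA:
  fixes g :: "'v \<Rightarrow> ('v \<Rightarrow> real) \<Rightarrow> real"
  assumes f: "finite V" and i: "i < card V" and fs: "finite (set_pmf sch)"
  shows "measure_pmf.expectation (joint V sch) (\<lambda>(t, s). g (t i) s)
       = measure_pmf.expectation sch (\<lambda>s. \<Sum>u\<in>V. g u s) / card V"
proof -
  have pu: "pmf (pmf_of_set V) a = 1 / card V" if "a \<in> V" for a
    using that f by (subst pmf_of_set) auto
  have "measure_pmf.expectation (joint V sch) (\<lambda>(t, s). g (t i) s)
      = measure_pmf.expectation (map_pmf (\<lambda>(t, s). (t i, s)) (joint V sch)) (\<lambda>(u, s). g u s)"
    by (simp add: case_prod_beta')
  also have "map_pmf (\<lambda>(t, s). (t i, s)) (joint V sch) = pair_pmf (pmf_of_set V) sch"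
    unfolding joint_def using map_pair[of "\<lambda>t. t i" id "type_dist V" sch] uniform_ti[OF f i]
    by (simp add: id_def)
  also have "measure_pmf.expectation (pair_pmf (pmf_of_set V) sch) (\<lambda>(u, s). g u s)
      = (\<Sum>z\<in>V \<times> set_pmf sch. (case z of (u, s) \<Rightarrow> g u s) * pmf (pair_pmf (pmf_of_set V) sch) z)"
    using f fs i card_gt_0_iff[of V] by (intro integral_measure_pmf_real) (auto simp: set_pair_pmf)
  also have "\<dots> = (\<Sum>u\<in>V. \<Sum>s\<in>set_pmf sch. g u s * (pmf sch s / card V))"
    using f i by (simp add: sum.cartesian_product) (intro sum.cong, auto simp: pmf_pair pu)
  also have "\<dots> = (\<Sum>s\<in>set_pmf sch. (\<Sum>u\<in>V. g u s) * pmf sch s) / card V"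
    by (subst sum.swap) (simp add: sum_divide_distrib sum_distrib_right)
  also have "(\<Sum>s\<in>set_pmf sch. (\<Sum>u\<in>V. g u s) * pmf sch s) = measure_pmf.expectation sch (\<lambda>s. \<Sum>u\<in>V. g u s)"
    using fs by (intro integral_measure_pmf_real[symmetric]) auto
  finally show ?thesis .
qed


lemma joint_finite:
  assumes f: "finite V" and fs: "finite (set_pmf sch)"
  shows "finite (set_pmf (joint V sch))"
  using TP_finite[OF f] TP_ne[OF f] fs by (simp add: joint_def set_pair_pmf type_dist_def)

lemma measure_sig:
  assumes f: "finite V" and i: "i < card V" and fs: "finite (set_pmf sch)"
  shows "measure_pmf.prob (joint V sch) (sig_event i \<theta>)
       = measure_pmf.expectation sch (\<lambda>s. \<Sum>u\<in>V. if s u = \<theta> then 1 else 0) / card V"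
proof -
  have "measure_pmf.prob (joint V sch) (sig_event i \<theta>)
      = measure_pmf.expectation (joint V sch) (\<lambda>(t, s). (\<lambda>u s. if s u = \<theta> then 1 else 0 :: real) (t i) s)"
  proof -
    have "measure_pmf.prob (joint V sch) (sig_event i \<theta>) = measure_pmf.expectation (joint V sch) (indicator (sig_event i \<theta>))"
      by simp
    also have "\<dots> = measure_pmf.expectation (joint V sch) (\<lambda>(t, s). (\<lambda>u s. if s u = \<theta> then 1 else 0 :: real) (t i) s)"
      by (rule Bochner_Integration.integral_cong) (auto simp: sig_event_def indicator_def)
    finally show ?thesis .
  qed
  also have "\<dots> = measure_pmf.expectation sch (\<lambda>s. \<Sum>u\<in>V. if s u = \<theta> then 1 else 0) / card V"
    by (rule claimA[OF f i fs])
  finally show ?thesis .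
qed

lemma Q_formula:
  assumes f: "finite V" and i: "i < card V" and fs: "finite (set_pmf sch)"
    and pos: "measure_pmf.prob (joint V sch) (sig_event i \<theta>) > 0"
  shows "Q V W sch i x \<theta>
     = measure_pmf.expectation sch (\<lambda>s. \<Sum>u\<in>V. (if s u = \<theta> then 1 else 0) * (x + (\<Sum>v'\<in>V - {u}. W u v' * s v')))
       / measure_pmf.expectation sch (\<lambda>s. \<Sum>u\<in>V. if s u = \<theta> then 1 else 0)"
proof -
  have ne: "card V > 0" using i by simp
  have "Q V W sch i x \<theta> = measure_pmf.expectation (joint V sch)
      (\<lambda>z. indicator (sig_event i \<theta>) z * (case z of (t, s) \<Rightarrow> x + (\<Sum>v'\<in>V - {t i}. W (t i) v' * s v')))
      / measure_pmf.prob (joint V sch) (sig_event i \<theta>)"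
    unfolding Q_def by (rule cond_integral[OF joint_finite[OF f fs] pos])
  also have "measure_pmf.expectation (joint V sch)
      (\<lambda>z. indicator (sig_event i \<theta>) z * (case z of (t, s) \<Rightarrow> x + (\<Sum>v'\<in>V - {t i}. W (t i) v' * s v')))
    = measure_pmf.expectation (joint V sch) (\<lambda>(t, s). (\<lambda>u s. (if s u = \<theta> then 1 else 0) * (x + (\<Sum>v'\<in>V - {u}. W u v' * s v'))) (t i) s)"
    by (auto intro!: Bochner_Integration.integral_cong simp: sig_event_def indicator_def)
  also have "\<dots> = measure_pmf.expectation sch (\<lambda>s. \<Sum>u\<in>V. (if s u = \<theta> then 1 else 0) * (x + (\<Sum>v'\<in>V - {u}. W u v' * s v'))) / card V"
    by (rule claimA[OF f i fs])
  finally show ?thesis using measure_sig[OF f i fs] ne by simp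
qed

lemma E_sum:
  fixes f :: "'a \<Rightarrow> real"
  assumes "finite (set_pmf D)"
  shows "measure_pmf.expectation D f = (\<Sum>S\<in>set_pmf D. f S * pmf D S)"
  using assms by (intro integral_measure_pmf_real) auto


lemma sum_if_in:
  fixes f :: "'v \<Rightarrow> real"
  assumes "finite V" "S \<subseteq> V"
  shows "(\<Sum>u\<in>V. if u \<in> S then f u else 0) = (\<Sum>u\<in>S. f u)"
proof -
  have "(\<Sum>u\<in>V. if u \<in> S then f u else 0) = (\<Sum>u\<in>V \<inter> S. f u)"
    using assms by (simp add: sum.inter_restrict)
  also have "V \<inter> S = S" using assms by blast
  finally show ?thesis .
qed

lemma pt_alpha:
  fixes W :: "'v \<Rightarrow> 'v \<Rightarrow> real"
  assumes f: "finite V" and S: "S \<subseteq> V" and a: "\<alpha> \<noteq> 0" and Wdiag: "\<forall>v\<in>V. W v v = 1"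
  shows "(\<Sum>u\<in>V. (if (if u \<in> S then \<alpha> else 0) = \<alpha> then 1 else 0) *
            (x + (\<Sum>v'\<in>V - {u}. W u v' * (if v' \<in> S then \<alpha> else 0))))
       = x * card S + \<alpha> * (Induced W S - card S)"
proof -
  have fS: "finite S" using f S finite_subset by blast
  have inner: "(\<Sum>v'\<in>V - {u}. W u v' * (if v' \<in> S then \<alpha> else 0)) = \<alpha> * ((\<Sum>v\<in>S. W u v) - 1)"
    if u: "u \<in> S" for u
  proof -
    have "(\<Sum>v'\<in>V - {u}. W u v' * (if v' \<in> S then \<alpha> else 0)) = (\<Sum>v'\<in>V - {u}. if v' \<in> S - {u} then \<alpha> * W u v' else 0)"
      by (intro sum.cong) auto
    also have "\<dots> = (\<Sum>v'\<in>S - {u}. \<alpha> * W u v')" using f S by (intro sum_if_in) auto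
    also have "\<dots> = \<alpha> * ((\<Sum>v\<in>S. W u v) - W u u)"
      using fS u by (simp add: sum_distrib_left[symmetric] sum_diff1)
    also have "W u u = 1" using Wdiag u S by blast
    finally show ?thesis .
  qed
  have "(\<Sum>u\<in>V. (if (if u \<in> S then \<alpha> else 0) = \<alpha> then 1 else 0) *
            (x + (\<Sum>v'\<in>V - {u}. W u v' * (if v' \<in> S then \<alpha> else 0))))
      = (\<Sum>u\<in>V. if u \<in> S then x + (\<Sum>v'\<in>V - {u}. W u v' * (if v' \<in> S then \<alpha> else 0)) else 0)"
    using a by (intro sum.cong) auto
  also have "\<dots> = (\<Sum>u\<in>S. x + (\<Sum>v'\<in>V - {u}. W u v' * (if v' \<in> S then \<alpha> else 0)))"
    by (rule sum_if_in[OF f S])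
  also have "\<dots> = (\<Sum>u\<in>S. x + \<alpha> * ((\<Sum>v\<in>S. W u v) - 1))"
    using inner by simp
  also have "\<dots> = x * card S + \<alpha> * (Induced W S - card S)"
    by (simp add: Induced_def sum.distrib sum_subtractf sum_distrib_left algebra_simps)
  finally show ?thesis .
qed

lemma pt_zero:
  fixes W :: "'v \<Rightarrow> 'v \<Rightarrow> real"
  assumes f: "finite V" and S: "S \<subseteq> V" and a: "\<alpha> \<noteq> 0" and Wsym: "\<forall>u\<in>V. \<forall>v\<in>V. W u v = W v u"
  shows "(\<Sum>u\<in>V. (if (if u \<in> S then \<alpha> else 0) = 0 then 1 else 0) *
            (x + (\<Sum>v'\<in>V - {u}. W u v' * (if v' \<in> S then \<alpha> else 0))))
       = x * card (V - S) + \<alpha> * Cut W S (V - S)"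
proof -
  have fS: "finite S" using f S finite_subset by blast
  have inner: "(\<Sum>v'\<in>V - {u}. W u v' * (if v' \<in> S then \<alpha> else 0)) = \<alpha> * (\<Sum>v\<in>S. W u v)"
    if u: "u \<in> V - S" for u
  proof -
    have "(\<Sum>v'\<in>V - {u}. W u v' * (if v' \<in> S then \<alpha> else 0)) = (\<Sum>v'\<in>V - {u}. if v' \<in> S then \<alpha> * W u v' else 0)"
      by (intro sum.cong) auto
    also have "\<dots> = (\<Sum>v'\<in>S. \<alpha> * W u v')" using f S u by (intro sum_if_in) auto
    finally show ?thesis by (simp add: sum_distrib_left)
  qed
  have "(\<Sum>u\<in>V. (if (if u \<in> S then \<alpha> else 0) = 0 then 1 else 0) *
            (x + (\<Sum>v'\<in>V - {u}. W u v' * (if v' \<in> S then \<alpha> else 0))))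
      = (\<Sum>u\<in>V. if u \<in> V - S then x + (\<Sum>v'\<in>V - {u}. W u v' * (if v' \<in> S then \<alpha> else 0)) else 0)"
    using a by (intro sum.cong) auto
  also have "\<dots> = (\<Sum>u\<in>V - S. x + (\<Sum>v'\<in>V - {u}. W u v' * (if v' \<in> S then \<alpha> else 0)))"
    using f by (intro sum_if_in) auto
  also have "\<dots> = (\<Sum>u\<in>V - S. x + \<alpha> * (\<Sum>v\<in>S. W u v))"
    using inner by simp
  also have "\<dots> = x * card (V - S) + \<alpha> * (\<Sum>u\<in>V - S. \<Sum>v\<in>S. W u v)"
    by (simp add: sum.distrib sum_distrib_left algebra_simps)
  also have "(\<Sum>u\<in>V - S. \<Sum>v\<in>S. W u v) = (\<Sum>v\<in>S. \<Sum>u\<in>V - S. W v u)"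
    using Wsym S by (subst sum.swap) (intro sum.cong; auto)
  finally show ?thesis by (simp add: Cut_def)
qed

lemma pt_count:
  assumes f: "finite V" and S: "S \<subseteq> V" and a: "\<alpha> \<noteq> 0"
  shows "(\<Sum>u\<in>V. if (if u \<in> S then \<alpha> else 0) = \<theta> then 1 else 0 :: real)
     = (if \<theta> = \<alpha> then card S else if \<theta> = 0 then card (V - S) else 0)"
proof -
  consider "\<theta> = \<alpha>" | "\<theta> = 0" | "\<theta> \<noteq> \<alpha> \<and> \<theta> \<noteq> 0" by blast
  then show ?thesis
  proof cases
    case 1
    then have "(\<Sum>u\<in>V. if (if u \<in> S then \<alpha> else 0) = \<theta> then 1 else 0 :: real) = (\<Sum>u\<in>V. if u \<in> S then 1 else 0)"
      using a by (intro sum.cong) auto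
    also have "\<dots> = card S" using sum_if_in[OF f S, of "\<lambda>_. 1"] by simp
    finally show ?thesis using 1 by simp
  next
    case 2
    then have "(\<Sum>u\<in>V. if (if u \<in> S then \<alpha> else 0) = \<theta> then 1 else 0 :: real) = (\<Sum>u\<in>V. if u \<in> V - S then 1 else 0)"
      using a by (intro sum.cong) auto
    also have "\<dots> = card (V - S)" using sum_if_in[OF f, of "V - S" "\<lambda>_. 1"] by simp
    finally show ?thesis using 2 a by simp
  next
    case 3
    then show ?thesis by (auto intro!: sum.neutral)
  qed
qed

lemma Induced_ge:
  fixes W :: "'v \<Rightarrow> 'v \<Rightarrow> real"
  assumes f: "finite V" and S: "S \<subseteq> V" and Wrange: "\<forall>u\<in>V. \<forall>v\<in>V. 0 \<le> W u v \<and> W u v \<le> 1"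
    and Wdiag: "\<forall>v\<in>V. W v v = 1"
  shows "real (card S) \<le> Induced W S"
proof -
  have fS: "finite S" using f S finite_subset by blast
  have "real (card S) = (\<Sum>u\<in>S. W u u)" using Wdiag S by (simp add: subset_iff)
  also have "\<dots> \<le> (\<Sum>u\<in>S. \<Sum>v\<in>S. W u v)"
    using fS S Wrange by (intro sum_mono member_le_sum) (auto simp: subset_iff)
  finally show ?thesis by (simp add: Induced_def)
qed


theorem lemma3p4:
  fixes V :: "'v set" and W :: "'v \<Rightarrow> 'v \<Rightarrow> real" and D :: "'v set pmf"
  assumes finV: "finite V"
    and Wsym: "\<forall>u\<in>V. \<forall>v\<in>V. W u v = W v u"
    and Wrange: "\<forall>u\<in>V. \<forall>v\<in>V. 0 \<le> W u v \<and> W u v \<le> 1"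
    and Wdiag: "\<forall>v\<in>V. W v v = 1"
    and Dsupp: "set_pmf D \<subseteq> Pow V"
    and Epos: "measure_pmf.expectation D (\<lambda>S. real (card S)) > 0"
    and ratio: "D = return_pmf V \<or>
      measure_pmf.expectation D (\<lambda>S. Cut W S (V - S)) / measure_pmf.expectation D (\<lambda>S. real (card (V - S)))
        \<ge> measure_pmf.expectation D (\<lambda>S. Induced W S) / measure_pmf.expectation D (\<lambda>S. real (card S))"
  shows "let ES = measure_pmf.expectation D (\<lambda>S. real (card S));
             EI = measure_pmf.expectation D (\<lambda>S. Induced W S);
             \<alpha> = ES / EI;
             sch = map_pmf (\<lambda>S v. if v \<in> S then \<alpha> else 0) D
         in is_signaling_scheme V {0, \<alpha>} sch \<and> persuasive V W sch \<and>
            cost V sch = ES\<^sup>2 / EI \<and> ES\<^sup>2 / EI \<le> ES"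
proof -
  define ES where "ES = measure_pmf.expectation D (\<lambda>S. real (card S))"
  define EI where "EI = measure_pmf.expectation D (\<lambda>S. Induced W S)"
  define EVS where "EVS = measure_pmf.expectation D (\<lambda>S. real (card (V - S)))"
  define EC where "EC = measure_pmf.expectation D (\<lambda>S. Cut W S (V - S))"
  define \<alpha> where "\<alpha> = ES / EI"
  define ind where "ind = (\<lambda>(S::'v set) (v::'v). if v \<in> S then \<alpha> else (0::real))"
  define sch where "sch = map_pmf ind D"
  have finD: "finite (set_pmf D)"
    using Dsupp finV by (meson finite_Pow_iff finite_subset)
  have SV: "S \<subseteq> V" if "S \<in> set_pmf D" for S using Dsupp that by blast
  have ESpos: "ES > 0" using Epos ES_def by simp
  have ESle: "ES \<le> EI"
    unfolding ES_def EI_def using finD SV Induced_ge[OF finV _ Wrange Wdiag]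
    by (intro integral_mono_AE integrable_measure_pmf_finite AE_pmfI) auto
  have EIpos: "EI > 0" using ESpos ESle by simp
  have apos: "\<alpha> > 0" using ESpos EIpos by (simp add: \<alpha>_def)
  have ane: "\<alpha> \<noteq> 0" using apos by simp
  have ale: "\<alpha> \<le> 1" using ESle EIpos by (simp add: \<alpha>_def)
  have fs: "finite (set_pmf sch)" using finD by (simp add: sch_def)
  have EVSnn: "EVS \<ge> 0" unfolding EVS_def by simp
  have sig: "is_signaling_scheme V {0, \<alpha>} sch"
    using apos ale by (auto simp: is_signaling_scheme_def sch_def ind_def)
  have cost: "cost V sch = ES\<^sup>2 / EI"
  proof -
    have "cost V sch = measure_pmf.expectation D (\<lambda>S. \<Sum>v\<in>V. \<bar>ind S v\<bar>)"
      by (simp add: cost_def sch_def)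
    also have "\<dots> = measure_pmf.expectation D (\<lambda>S. \<alpha> * real (card S))"
    proof (rule integral_cong_AE)
      show "AE S in measure_pmf D. (\<Sum>v\<in>V. \<bar>ind S v\<bar>) = \<alpha> * real (card S)"
      proof (rule AE_pmfI)
        fix S assume "S \<in> set_pmf D"
        then have S: "S \<subseteq> V" by (rule SV)
        have "(\<Sum>v\<in>V. \<bar>ind S v\<bar>) = (\<Sum>v\<in>V. if v \<in> S then \<alpha> else 0)"
          using apos by (intro sum.cong) (auto simp: ind_def)
        also have "\<dots> = (\<Sum>v\<in>S. \<alpha>)" by (rule sum_if_in[OF finV S])
        finally show "(\<Sum>v\<in>V. \<bar>ind S v\<bar>) = \<alpha> * real (card S)" by simp
      qed
    qed auto
    also have "\<dots> = \<alpha> * ES" by (simp add: ES_def)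
    finally show ?thesis by (simp add: \<alpha>_def power2_eq_square)
  qed
  have le: "ES\<^sup>2 / EI \<le> ES"
    using ESle EIpos ESpos by (simp add: power2_eq_square field_simps mult_left_mono)
  have pers: "persuasive V W sch"
    unfolding persuasive_def
  proof (intro allI impI)
    fix i \<theta> assume i: "i < card V" and pos: "measure_pmf.prob (joint V sch) (sig_event i \<theta>) > 0"
    have nV: "card V > 0" using i by simp
    have cnt: "measure_pmf.expectation sch (\<lambda>s. \<Sum>u\<in>V. if s u = \<theta> then 1 else 0)
        = (if \<theta> = \<alpha> then ES else if \<theta> = 0 then EVS else 0)"
    proof -
      have "measure_pmf.expectation sch (\<lambda>s. \<Sum>u\<in>V. if s u = \<theta> then 1 else 0)
          = measure_pmf.expectation D (\<lambda>S. if \<theta> = \<alpha> then real (card S) else if \<theta> = 0 then real (card (V - S)) else 0)"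
        unfolding sch_def integral_map_pmf
        by (rule integral_cong_AE) (auto intro!: AE_pmfI simp: ind_def pt_count[OF finV _ ane] SV apos[THEN less_imp_neq, symmetric])
      then show ?thesis by (simp add: ES_def EVS_def)
    qed
    have Qf: "Q V W sch i x \<theta> = measure_pmf.expectation sch (\<lambda>s. \<Sum>u\<in>V. (if s u = \<theta> then 1 else 0) * (x + (\<Sum>v'\<in>V - {u}. W u v' * s v')))
       / (if \<theta> = \<alpha> then ES else if \<theta> = 0 then EVS else 0)" for x
      using Q_formula[OF finV i fs pos] cnt by simp
    have mpos: "(if \<theta> = \<alpha> then ES else if \<theta> = 0 then EVS else 0) > 0"
      using pos measure_sig[OF finV i fs, of \<theta>] cnt nV by (simp add: zero_less_divide_iff)
    consider "\<theta> = \<alpha>" | "\<theta> = 0" using mpos by (auto split: if_splits)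
    then show "1 \<le> Q V W sch i \<theta> \<theta> \<and> \<theta> = (LEAST x. 0 \<le> x \<and> 1 \<le> Q V W sch i x \<theta>)"
    proof cases
      case 1
      have Qa: "Q V W sch i x \<theta> = x + 1 - \<alpha>" for x
      proof -
        have "measure_pmf.expectation sch (\<lambda>s. \<Sum>u\<in>V. (if s u = \<theta> then 1 else 0) * (x + (\<Sum>v'\<in>V - {u}. W u v' * s v')))
            = measure_pmf.expectation D (\<lambda>S. x * real (card S) + \<alpha> * (Induced W S - real (card S)))"
          unfolding sch_def integral_map_pmf 1
          by (rule integral_cong_AE) (auto intro!: AE_pmfI simp: ind_def pt_alpha[where W=W, OF finV _ ane Wdiag] SV apos[THEN less_imp_neq, symmetric])
        also have "\<dots> = x * ES + \<alpha> * (EI - ES)"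
          using finD by (simp add: ES_def EI_def integrable_measure_pmf_finite)
        finally have calc: "measure_pmf.expectation sch (\<lambda>s. \<Sum>u\<in>V. (if s u = \<theta> then 1 else 0) * (x + (\<Sum>v'\<in>V - {u}. W u v' * s v'))) = x * ES + \<alpha> * (EI - ES)" .
        have "Q V W sch i x \<theta> = (x * ES + \<alpha> * (EI - ES)) / ES"
          using Qf[of x] calc by (simp add: 1)
        also have "\<dots> = x + 1 - \<alpha>" using ESpos EIpos by (simp add: \<alpha>_def field_simps)
        finally show ?thesis .
      qed
      have L: "(LEAST x. 0 \<le> x \<and> 1 \<le> Q V W sch i x \<theta>) = \<alpha>"
        by (rule Least_equality) (use apos in \<open>auto simp: Qa\<close>)
      show ?thesis using L Qa 1 by simp
    next
      case 2
      have EVSpos: "EVS > 0" using mpos 2 apos by simp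
      have Dne: "D \<noteq> return_pmf V"
      proof
        assume "D = return_pmf V"
        then have "EVS = 0" by (simp add: EVS_def)
        then show False using EVSpos by simp
      qed
      have rat: "EC / EVS \<ge> EI / ES" using ratio Dne by (simp add: EC_def EVS_def EI_def ES_def)
      have c1: "\<alpha> * EC / EVS \<ge> 1"
      proof -
        have "\<alpha> * (EI / ES) \<le> \<alpha> * (EC / EVS)" using rat apos by (intro mult_left_mono) auto
        moreover have "\<alpha> * (EI / ES) = 1" using ESpos EIpos by (simp add: \<alpha>_def)
        ultimately show ?thesis by (metis times_divide_eq_right)
      qed
      have Qz: "Q V W sch i x \<theta> = x + \<alpha> * EC / EVS" for x
      proof -
        have "measure_pmf.expectation sch (\<lambda>s. \<Sum>u\<in>V. (if s u = \<theta> then 1 else 0) * (x + (\<Sum>v'\<in>V - {u}. W u v' * s v')))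
            = measure_pmf.expectation D (\<lambda>S. x * real (card (V - S)) + \<alpha> * Cut W S (V - S))"
          unfolding sch_def integral_map_pmf 2
          by (rule integral_cong_AE) (auto intro!: AE_pmfI simp: ind_def pt_zero[where W=W, OF finV _ ane Wsym] SV apos[THEN less_imp_neq, symmetric])
        also have "\<dots> = x * EVS + \<alpha> * EC"
          using finD by (simp add: EVS_def EC_def integrable_measure_pmf_finite)
        finally have calc: "measure_pmf.expectation sch (\<lambda>s. \<Sum>u\<in>V. (if s u = \<theta> then 1 else 0) * (x + (\<Sum>v'\<in>V - {u}. W u v' * s v'))) = x * EVS + \<alpha> * EC" .
        have "Q V W sch i x \<theta> = (x * EVS + \<alpha> * EC) / EVS"
          using Qf[of x] calc ane by (simp add: 2)
        also have "\<dots> = x + \<alpha> * EC / EVS" using EVSpos by (simp add: field_simps)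
        finally show ?thesis .
      qed
      have L: "(LEAST x. 0 \<le> x \<and> 1 \<le> Q V W sch i x \<theta>) = 0"
        by (rule Least_equality) (use c1 in \<open>auto simp: Qz\<close>)
      show ?thesis using L Qz 2 c1 by simp
    qed
  qed
  have goal: "is_signaling_scheme V {0, \<alpha>} sch \<and> persuasive V W sch \<and>
            cost V sch = ES\<^sup>2 / EI \<and> ES\<^sup>2 / EI \<le> ES"
    using sig pers cost le by blast
  show ?thesis
    using goal unfolding Let_def sch_def ind_def \<alpha>_def ES_def EI_def .
qed

end
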